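(* Let $\mathbf{S}$ be a distributive meet semilattice, $n\ge1$ an integer, and $U$ an upset of $\mathbf{S}$. Then for every $a\in\mathbf{S}$, $a$ belongs to the $n$-filter generated by $U$ if and only if there is a non-empty finite set $X\subseteq U$ such that $\bigwedge Y\in U$ for each $Y\subseteq_n X$ and $\bigwedge X\le a$. Moreover, the condition $\bigwedge X\le a$ may equivalently be replaced by $\bigwedge X=a$.
   Context: A meet semilattice is distributive if whenever $x\wedge y\le z$ there are $x'\ge x$ and $y'\ge y$ with $x'\wedge y'=z$. For a set $X$, $Y\subseteq_n X$ means $Y$ is a non-empty subset of $X$ with $|Y|\le n$. An $n$-filter on a meet semilattice $\mathbf{S}$ is an upset $F\subseteq\mathbf{S}$ such that for every non-empty finite $X\subseteq F$: if $\bigwedge Y\in F$ for every $Y\subseteq_n X$, then $\bigwedge X\in F$. The $n$-filters are closed under arbitrary intersections, and the $n$-filter generated by a set is the smallest $n$-filter containing it. *)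

theory Defs
  imports Main
begin

definition distributive_meet_semilattice :: "('a::semilattice_inf) itself \<Rightarrow> bool" where
  "distributive_meet_semilattice _ \<longleftrightarrow>
     (\<forall>x y z::'a. inf x y \<le> z \<longrightarrow> (\<exists>x' y'. x \<le> x' \<and> y \<le> y' \<and> inf x' y' = z))"

definition upset :: "('a::order) set \<Rightarrow> bool" where
  "upset U \<longleftrightarrow> (\<forall>x y. x \<in> U \<longrightarrow> x \<le> y \<longrightarrow> y \<in> U)"

definition subset_n :: "'a set \<Rightarrow> nat \<Rightarrow> 'a set \<Rightarrow> bool" where
  "subset_n Y n X \<longleftrightarrow> Y \<noteq> {} \<and> Y \<subseteq> X \<and> finite Y \<and> card Y \<le> n"

definition n_filter :: "nat \<Rightarrow> ('a::semilattice_inf) set \<Rightarrow> bool" where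
  "n_filter n F \<longleftrightarrow> upset F \<and>
     (\<forall>X. X \<noteq> {} \<and> finite X \<and> X \<subseteq> F \<longrightarrow>
        (\<forall>Y. subset_n Y n X \<longrightarrow> Inf_fin Y \<in> F) \<longrightarrow> Inf_fin X \<in> F)"

definition n_filter_generated :: "nat \<Rightarrow> ('a::semilattice_inf) set \<Rightarrow> 'a set" where
  "n_filter_generated n U = \<Inter>{F. n_filter n F \<and> U \<subseteq> F}"

end

theory Submission
  imports Defs
begin

lemma lift:
  fixes A :: "('a::semilattice_inf) set"
  assumes D: "distributive_meet_semilattice TYPE('a)"
    and "finite A" "A \<noteq> {}"
  shows "Inf_fin A \<le> c \<Longrightarrow> \<exists>Q. finite Q \<and> Q \<noteq> {} \<and> Inf_fin Q = c \<and> (\<forall>q\<in>Q. \<exists>a\<in>A. a \<le> q)"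
  using assms(2,3)
proof (induction A arbitrary: c rule: finite_ne_induct)
  case (singleton x)
  then show ?case by (intro exI[of _ "{c}"]) auto
next
  case (insert x A)
  have "inf x (Inf_fin A) \<le> c" using insert by simp
  then obtain x' y' where xy: "x \<le> x'" "Inf_fin A \<le> y'" "inf x' y' = c"
    using D unfolding distributive_meet_semilattice_def by blast
  obtain Q where Q: "finite Q" "Q \<noteq> {}" "Inf_fin Q = y'" "\<forall>q\<in>Q. \<exists>a\<in>A. a \<le> q"
    using insert.IH[OF xy(2)] by blast
  show ?case
    by (rule exI[of _ "insert x' Q"]) (use Q xy in auto)
qed

lemma multiM:
  fixes A' :: "('a::semilattice_inf) set"
  assumes D: "distributive_meet_semilattice TYPE('a)"
    and B: "finite B" "B \<noteq> {}"
    and "finite A'" "A' \<noteq> {}"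
  shows "(\<forall>a'\<in>A'. Inf_fin B \<le> a') \<Longrightarrow> \<exists>Q. finite Q \<and> Q \<noteq> {} \<and> Inf_fin Q = Inf_fin A' \<and>
     (\<forall>q\<in>Q. (\<exists>a\<in>A'. a \<le> q) \<and> (\<exists>b\<in>B. b \<le> q))"
  using assms(4,5)
proof (induction A' rule: finite_ne_induct)
  case (singleton x)
  then have "Inf_fin B \<le> x" by simp
  then obtain Q where Q: "finite Q" "Q \<noteq> {}" "Inf_fin Q = x" "\<forall>q\<in>Q. \<exists>a\<in>B. a \<le> q"
    using lift[OF D B] by blast
  have "\<forall>q\<in>Q. x \<le> q"
  proof
    fix q assume "q \<in> Q" then show "x \<le> q" using Q(1,3) Inf_fin.coboundedI[of Q q] by simp
  qed
  then have "\<forall>q\<in>Q. (\<exists>a\<in>{x}. a \<le> q) \<and> (\<exists>b\<in>B. b \<le> q)" using Q(4) by blast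
  then show ?case using Q(1,2,3) by (intro exI[of _ Q]) simp
next
  case (insert x A)
  then have "Inf_fin B \<le> x" by simp
  then obtain Q1 where Q: "finite Q1" "Q1 \<noteq> {}" "Inf_fin Q1 = x" "\<forall>q\<in>Q1. \<exists>a\<in>B. a \<le> q"
    using lift[OF D B] by blast
  have Q1x: "\<forall>q\<in>Q1. x \<le> q"
  proof
    fix q assume "q \<in> Q1" then show "x \<le> q" using Q(1,3) Inf_fin.coboundedI[of Q1 q] by simp
  qed
  have "\<forall>a'\<in>A. Inf_fin B \<le> a'" using insert.prems by simp
  then obtain Q2 where Q2: "finite Q2" "Q2 \<noteq> {}" "Inf_fin Q2 = Inf_fin A" "\<forall>q\<in>Q2. (\<exists>a\<in>A. a \<le> q) \<and> (\<exists>b\<in>B. b \<le> q)"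
    using insert.IH by blast
  have inf: "Inf_fin (Q1 \<union> Q2) = Inf_fin (insert x A)"
    using Q Q2 insert.hyps by (simp add: Inf_fin.union)
  have "\<forall>q\<in>Q1 \<union> Q2. (\<exists>a\<in>insert x A. a \<le> q) \<and> (\<exists>b\<in>B. b \<le> q)"
    using Q(4) Q2(4) Q1x by blast
  then show ?case using Q(1,2) Q2(1,2) inf by (intro exI[of _ "Q1 \<union> Q2"]) simp
qed

lemma twofam:
  fixes A :: "('a::semilattice_inf) set"
  assumes D: "distributive_meet_semilattice TYPE('a)"
    and "finite A" "A \<noteq> {}" "finite B" "B \<noteq> {}" "Inf_fin A \<le> c" "Inf_fin B \<le> c"
  shows "\<exists>Q. finite Q \<and> Q \<noteq> {} \<and> Inf_fin Q = c \<and>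
     (\<forall>q\<in>Q. (\<exists>a\<in>A. a \<le> q) \<and> (\<exists>b\<in>B. b \<le> q))"
proof -
  obtain A' where A': "finite A'" "A' \<noteq> {}" "Inf_fin A' = c" "\<forall>q\<in>A'. \<exists>a\<in>A. a \<le> q"
    using lift[OF D assms(2,3,6)] by blast
  have "\<forall>a'\<in>A'. Inf_fin B \<le> a'"
  proof
    fix a' assume "a' \<in> A'"
    then have "c \<le> a'" using A'(1,3) Inf_fin.coboundedI[of A' a'] by simp
    then show "Inf_fin B \<le> a'" using assms(7) by (rule order_trans[rotated])
  qed
  then obtain Q where Q: "finite Q" "Q \<noteq> {}" "Inf_fin Q = Inf_fin A'"
     "\<forall>q\<in>Q. (\<exists>a\<in>A'. a \<le> q) \<and> (\<exists>b\<in>B. b \<le> q)"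
    using multiM[OF D assms(4,5) A'(1,2)] by blast
  have "\<forall>q\<in>Q. (\<exists>a\<in>A. a \<le> q) \<and> (\<exists>b\<in>B. b \<le> q)"
  proof
    fix q assume q: "q \<in> Q"
    then obtain a' b where ab: "a' \<in> A'" "a' \<le> q" "b \<in> B" "b \<le> q" using Q(4) by blast
    moreover obtain a where "a \<in> A" "a \<le> a'" using A'(4) ab(1) by blast
    ultimately show "(\<exists>a\<in>A. a \<le> q) \<and> (\<exists>b\<in>B. b \<le> q)" by (meson order_trans)
  qed
  then show ?thesis using Q A' by auto
qed

lemma multifam:
  fixes Af :: "'i \<Rightarrow> ('a::semilattice_inf) set"
  assumes D: "distributive_meet_semilattice TYPE('a)"
    and "finite I" "I \<noteq> {}"
  shows "(\<forall>i\<in>I. finite (Af i) \<and> Af i \<noteq> {} \<and> Inf_fin (Af i) \<le> c) \<Longrightarrow>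
    \<exists>Q. finite Q \<and> Q \<noteq> {} \<and> Inf_fin Q = c \<and> (\<forall>q\<in>Q. \<forall>i\<in>I. \<exists>a\<in>Af i. a \<le> q)"
  using assms(2,3)
proof (induction I rule: finite_ne_induct)
  case (singleton i)
  then show ?case using lift[OF D, of "Af i" c] by auto
next
  case (insert i I)
  then obtain Q' where Q': "finite Q'" "Q' \<noteq> {}" "Inf_fin Q' = c" "\<forall>q\<in>Q'. \<forall>i\<in>I. \<exists>a\<in>Af i. a \<le> q"
    by auto
  obtain Q where Q: "finite Q" "Q \<noteq> {}" "Inf_fin Q = c"
     "\<forall>q\<in>Q. (\<exists>a\<in>Q'. a \<le> q) \<and> (\<exists>b\<in>Af i. b \<le> q)"
    using twofam[OF D Q'(1,2), of "Af i" c] Q' insert.prems by auto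
  show ?case
  proof (intro exI[of _ Q] conjI ballI)
    fix q j assume q: "q \<in> Q" and j: "j \<in> insert i I"
    obtain q' b where qb: "q' \<in> Q'" "q' \<le> q" "b \<in> Af i" "b \<le> q" using Q(4) q by blast
    show "\<exists>a\<in>Af j. a \<le> q"
    proof (cases "j = i")
      case True then show ?thesis using qb by blast
    next
      case False
      then have "j \<in> I" using j by simp
      then obtain a where "a \<in> Af j" "a \<le> q'" using Q'(4) qb(1) by blast
      then show ?thesis using qb(2) by (meson order_trans)
    qed
  qed (use Q in auto)
qed

lemma above_preserves:
  fixes X :: "('a::semilattice_inf) set"
  assumes U: "upset U" and XU: "X \<subseteq> U"
    and CX: "\<forall>Y. subset_n Y n X \<longrightarrow> Inf_fin Y \<in> U"
    and ab: "\<forall>q\<in>Q. \<exists>x\<in>X. x \<le> q"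
  shows "Q \<subseteq> U \<and> (\<forall>Y. subset_n Y n Q \<longrightarrow> Inf_fin Y \<in> U)"
proof
  show "Q \<subseteq> U" using ab XU U unfolding upset_def by blast
next
  show "\<forall>Y. subset_n Y n Q \<longrightarrow> Inf_fin Y \<in> U"
  proof (intro allI impI)
    fix Y assume Y: "subset_n Y n Q"
    then have Yp: "Y \<noteq> {}" "Y \<subseteq> Q" "finite Y" "card Y \<le> n" unfolding subset_n_def by auto
    have "\<forall>y\<in>Y. \<exists>x. x \<in> X \<and> x \<le> y" using ab Yp(2) by blast
    then obtain g where g: "\<forall>y\<in>Y. g y \<in> X \<and> g y \<le> y"
      using bchoice[of Y "\<lambda>y x. x \<in> X \<and> x \<le> y"] by blast
    have "subset_n (g ` Y) n X"
      unfolding subset_n_def using Yp g card_image_le[OF Yp(3), of g] by auto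
    then have in1: "Inf_fin (g ` Y) \<in> U" using CX by blast
    have "Inf_fin (g ` Y) \<le> Inf_fin Y"
    proof (rule Inf_fin.boundedI[OF Yp(3,1)])
      fix y assume "y \<in> Y"
      then show "Inf_fin (g ` Y) \<le> y"
      proof -
        have "Inf_fin (g ` Y) \<le> g y" using Inf_fin.coboundedI[of "g ` Y" "g y"] Yp(3) \<open>y \<in> Y\<close> by simp
        then show ?thesis using g \<open>y \<in> Y\<close> by (meson order_trans)
      qed
    qed
    then show "Inf_fin Y \<in> U" using in1 U unfolding upset_def by blast
  qed
qed

theorem mainTheorem2:
  fixes U :: "('a::semilattice_inf) set" and n :: nat
  assumes "distributive_meet_semilattice TYPE('a)"
    and "n \<ge> 1"
    and "upset U"
  shows "\<forall>a::'a.
      (a \<in> n_filter_generated n U \<longleftrightarrow>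
         (\<exists>X. X \<noteq> {} \<and> finite X \<and> X \<subseteq> U \<and>
              (\<forall>Y. subset_n Y n X \<longrightarrow> Inf_fin Y \<in> U) \<and> Inf_fin X \<le> a))
    \<and> (a \<in> n_filter_generated n U \<longleftrightarrow>
         (\<exists>X. X \<noteq> {} \<and> finite X \<and> X \<subseteq> U \<and>
              (\<forall>Y. subset_n Y n X \<longrightarrow> Inf_fin Y \<in> U) \<and> Inf_fin X = a))"
proof -
  note D = assms(1) and Uup = assms(3)
  define P where "P X \<longleftrightarrow> X \<noteq> {} \<and> finite X \<and> X \<subseteq> U \<and> (\<forall>Y. subset_n Y n X \<longrightarrow> Inf_fin Y \<in> U)" for X
  define G where "G = {a. \<exists>X. P X \<and> Inf_fin X \<le> a}"
  have G_gen: "a \<in> n_filter_generated n U" if "a \<in> G" for a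
  proof -
    obtain X where X: "P X" "Inf_fin X \<le> a" using \<open>a \<in> G\<close> unfolding G_def by blast
    show ?thesis unfolding n_filter_generated_def
    proof
      fix F assume "F \<in> {F. n_filter n F \<and> U \<subseteq> F}"
      then have F: "n_filter n F" "U \<subseteq> F" by auto
      have "Inf_fin X \<in> F" using F X(1) unfolding n_filter_def P_def by blast
      then show "a \<in> F" using F(1) X(2) unfolding n_filter_def upset_def by blast
    qed
  qed
  have G_eq: "\<exists>X. P X \<and> Inf_fin X = a" if "a \<in> G" for a
  proof -
    obtain X where X: "P X" "Inf_fin X \<le> a" using \<open>a \<in> G\<close> unfolding G_def by blast
    obtain Q where Q: "finite Q" "Q \<noteq> {}" "Inf_fin Q = a" "\<forall>q\<in>Q. \<exists>x\<in>X. x \<le> q"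
      using lift[OF D, of X a] X unfolding P_def by auto
    have "Q \<subseteq> U \<and> (\<forall>Y. subset_n Y n Q \<longrightarrow> Inf_fin Y \<in> U)"
      using above_preserves[OF Uup, of X n Q] X(1) Q(4) unfolding P_def by blast
    then show ?thesis using Q unfolding P_def by blast
  qed
  have UG: "U \<subseteq> G"
  proof
    fix u assume u: "u \<in> U"
    have "P {u}" unfolding P_def subset_n_def
    proof (intro conjI allI impI)
      fix Y :: "'a set" assume "Y \<noteq> {} \<and> Y \<subseteq> {u} \<and> finite Y \<and> card Y \<le> n"
      then have "Y = {u}" by auto
      then show "Inf_fin Y \<in> U" using u by simp
    qed (use u in auto)
    then show "u \<in> G" unfolding G_def by force
  qed
  have Gfil: "n_filter n G"
    unfolding n_filter_def
  proof (intro conjI allI impI)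
    show "upset G" unfolding upset_def
    proof (intro allI impI)
      fix x y assume "x \<in> G" "x \<le> y"
      then obtain X where "P X" "Inf_fin X \<le> x" unfolding G_def by blast
      moreover have "Inf_fin X \<le> y" using calculation(2) \<open>x \<le> y\<close> by (rule order_trans)
      ultimately show "y \<in> G" unfolding G_def by blast
    qed
  next
    fix Z assume Z: "Z \<noteq> {} \<and> finite Z \<and> Z \<subseteq> G"
      and ZW: "\<forall>W. subset_n W n Z \<longrightarrow> Inf_fin W \<in> G"
    have "\<forall>W. \<exists>X. subset_n W n Z \<longrightarrow> P X \<and> Inf_fin X \<le> Inf_fin W"
      using ZW unfolding G_def by blast
    then obtain XW where XW: "\<And>W. subset_n W n Z \<Longrightarrow> P (XW W) \<and> Inf_fin (XW W) \<le> Inf_fin W"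
      by metis
    define I where "I z = {W. subset_n W n Z \<and> z \<in> W}" for z
    have "\<exists>Q. finite Q \<and> Q \<noteq> {} \<and> Inf_fin Q = z \<and> (\<forall>q\<in>Q. \<forall>W\<in>I z. \<exists>a\<in>XW W. a \<le> q)"
      if z: "z \<in> Z" for z
    proof (rule multifam[OF D])
      show "finite (I z)" 
        by (rule finite_subset[of _ "Pow Z"]) (use Z in \<open>auto simp: I_def subset_n_def\<close>)
      have "subset_n {z} n Z" using z assms(2) unfolding subset_n_def by auto
      then show "I z \<noteq> {}" unfolding I_def by blast
      show "\<forall>W\<in>I z. finite (XW W) \<and> XW W \<noteq> {} \<and> Inf_fin (XW W) \<le> z"
      proof
        fix W assume W: "W \<in> I z"
        then have W1: "subset_n W n Z" "z \<in> W" unfolding I_def by auto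
        have "finite W" using W1(1) unfolding subset_n_def by blast
        then have "Inf_fin W \<le> z" using W1(2) by (rule Inf_fin.coboundedI)
        have h: "Inf_fin (XW W) \<le> Inf_fin W" "finite (XW W)" "XW W \<noteq> {}"
          using XW[OF W1(1)] unfolding P_def by blast+
        have "Inf_fin (XW W) \<le> z" using h(1) \<open>Inf_fin W \<le> z\<close> by (rule order_trans)
        then show "finite (XW W) \<and> XW W \<noteq> {} \<and> Inf_fin (XW W) \<le> z"
          using h by blast
      qed
    qed
    then obtain Qf where Qf: "\<And>z. z \<in> Z \<Longrightarrow> finite (Qf z) \<and> Qf z \<noteq> {} \<and> Inf_fin (Qf z) = z \<and>
         (\<forall>q\<in>Qf z. \<forall>W\<in>I z. \<exists>a\<in>XW W. a \<le> q)"
      by metis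
    have Qfin: "finite (Qf z)" if "z \<in> Z" for z using Qf[OF that] by blast
    have Qne: "Qf z \<noteq> {}" if "z \<in> Z" for z using Qf[OF that] by blast
    have Qinf: "Inf_fin (Qf z) = z" if "z \<in> Z" for z using Qf[OF that] by blast
    have Qab: "\<exists>a\<in>XW W. a \<le> q" if "z \<in> Z" "q \<in> Qf z" "W \<in> I z" for z q W
      using Qf[OF that(1)] that(2,3) by blast
    have Zfin: "finite Z" and Zne: "Z \<noteq> {}" using Z by auto
    define X where "X = (\<Union>z\<in>Z. Qf z)"
    have Xfin: "finite X" unfolding X_def using Zfin Qfin by blast
    have Xne: "X \<noteq> {}" unfolding X_def using Zne Qne by blast
    have XinfZ: "Inf_fin X \<le> Inf_fin Z"
    proof (rule Inf_fin.boundedI[OF Zfin Zne])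
      fix z assume z: "z \<in> Z"
      have sub: "Qf z \<subseteq> X" unfolding X_def using z by blast
      have "Inf_fin X \<le> Inf_fin (Qf z)"
        by (rule Inf_fin.subset_imp[OF sub Qne[OF z] Xfin])
      then show "Inf_fin X \<le> z" using Qinf[OF z] by simp
    qed
    have XU: "X \<subseteq> U"
    proof
      fix q assume "q \<in> X"
      then obtain z where z: "z \<in> Z" "q \<in> Qf z" unfolding X_def by blast
      have sz: "subset_n {z} n Z" using z assms(2) unfolding subset_n_def by auto
      then have "{z} \<in> I z" unfolding I_def by auto
      then obtain a where a: "a \<in> XW {z}" "a \<le> q" using Qab[OF z] by blast
      have "XW {z} \<subseteq> U" using XW[OF sz] unfolding P_def by blast
      then have "a \<in> U" using a by blast
      then show "q \<in> U" using a Uup unfolding upset_def by blast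
    qed
    have XC: "\<forall>Y. subset_n Y n X \<longrightarrow> Inf_fin Y \<in> U"
    proof (intro allI impI)
      fix Y assume Y: "subset_n Y n X"
      then have Yp: "Y \<noteq> {}" "Y \<subseteq> X" "finite Y" "card Y \<le> n" unfolding subset_n_def by auto
      have "\<forall>y\<in>Y. \<exists>z. z \<in> Z \<and> y \<in> Qf z" using Yp(2) unfolding X_def by blast
      then obtain lab where lab: "\<forall>y\<in>Y. lab y \<in> Z \<and> y \<in> Qf (lab y)"
        using bchoice[of Y "\<lambda>y z. z \<in> Z \<and> y \<in> Qf z"] by blast
      define W where "W = lab ` Y"
      have cW: "card W \<le> n" unfolding W_def using card_image_le[OF Yp(3), of lab] Yp(4) by linarith
      have sW: "subset_n W n Z"
        unfolding subset_n_def using cW Yp(1,3) lab unfolding W_def by blast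
      have "\<forall>y\<in>Y. \<exists>a\<in>XW W. a \<le> y"
      proof
        fix y assume y: "y \<in> Y"
        then have "W \<in> I (lab y)" using sW unfolding I_def W_def by blast
        then show "\<exists>a\<in>XW W. a \<le> y" using Qab lab y by blast
      qed
      moreover have "XW W \<subseteq> U" "\<forall>Y. subset_n Y n (XW W) \<longrightarrow> Inf_fin Y \<in> U"
        using XW[OF sW] unfolding P_def by blast+
      ultimately have "Y \<subseteq> U \<and> (\<forall>Y'. subset_n Y' n Y \<longrightarrow> Inf_fin Y' \<in> U)"
        using above_preserves[OF Uup, of "XW W" n Y] by blast
      moreover have "subset_n Y n Y" using Yp unfolding subset_n_def by auto
      ultimately show "Inf_fin Y \<in> U" by blast
    qed
    have "P X" unfolding P_def using Xfin Xne XU XC by blast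
    then show "Inf_fin Z \<in> G" unfolding G_def using XinfZ by blast
  qed
  have gen_G: "a \<in> G" if "a \<in> n_filter_generated n U" for a
    using that Gfil UG unfolding n_filter_generated_def by blast
  have iffG: "a \<in> n_filter_generated n U \<longleftrightarrow> a \<in> G" for a
    using gen_G G_gen by blast
  have G1: "a \<in> G \<longleftrightarrow> (\<exists>X. X \<noteq> {} \<and> finite X \<and> X \<subseteq> U \<and>
              (\<forall>Y. subset_n Y n X \<longrightarrow> Inf_fin Y \<in> U) \<and> Inf_fin X \<le> a)" for a
    by (simp add: G_def P_def conj_assoc)
  have G2: "a \<in> G \<longleftrightarrow> (\<exists>X. X \<noteq> {} \<and> finite X \<and> X \<subseteq> U \<and>
              (\<forall>Y. subset_n Y n X \<longrightarrow> Inf_fin Y \<in> U) \<and> Inf_fin X = a)" for a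
  proof
    assume "a \<in> G"
    from G_eq[OF this] obtain X where "P X" "Inf_fin X = a" by blast
    then show "\<exists>X. X \<noteq> {} \<and> finite X \<and> X \<subseteq> U \<and>
              (\<forall>Y. subset_n Y n X \<longrightarrow> Inf_fin Y \<in> U) \<and> Inf_fin X = a"
      unfolding P_def by blast
  next
    assume "\<exists>X. X \<noteq> {} \<and> finite X \<and> X \<subseteq> U \<and>
              (\<forall>Y. subset_n Y n X \<longrightarrow> Inf_fin Y \<in> U) \<and> Inf_fin X = a"
    then obtain X where "P X" "Inf_fin X = a" unfolding P_def by blast
    then show "a \<in> G" unfolding G_def by force
  qed
  show ?thesis using iffG G1 G2 by blast
qed

end
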